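(* Let $X\in\tilde{\mathcal{A}}_{conv.}$ and $\lambda\in\mathbb{C}$. Then there exist a unique $Q\in\tilde{\mathcal{A}}_{conv.}$ and a unique $R\in B$ such that $X=Q(a-\lambda b)+R$ in $\tilde{\mathcal{A}}_{conv.}$.
   Context: $\widehat{\mathcal{A}}$ is the algebra of formal power series $\sum_{p,q\ge0}\gamma_{p,q}a^pb^q$ in variables $a,b$ with $ab-ba=b^2$ (the $(a,b)$-adic completion of the polynomial algebra with this relation). $\tilde{\mathcal{A}}_{conv.}\subset\widehat{\mathcal{A}}$ is the subalgebra of series with $|\gamma_{p,q}|\le C_RR^{p+q}q!$ for some $R>1$, $C_R>0$. $B=\mathbb{C}\{\{b\}\}\subset\tilde{\mathcal{A}}_{conv.}$ is the subalgebra of series $\sum c_qb^q$ with $|c_q|\le CR^qq!$ for some $C,R$. *)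

theory Defs
  imports Complex_Main
begin

text \<open>An element of the completed algebra \<open>\<widehat>A\<close> is represented by its family of
  normal-ordered coefficients: \<open>X p q\<close> is the coefficient of \<open>a^p b^q\<close>.\<close>
type_synonym ser = "nat \<Rightarrow> nat \<Rightarrow> complex"

definition ser_add :: "ser \<Rightarrow> ser \<Rightarrow> ser" where
  "ser_add X Y = (\<lambda>p q. X p q + Y p q)"

text \<open>Right multiplication by \<open>a\<close>. From \<open>ab - ba = b^2\<close> one gets
  \<open>b^j a = a b^j - j b^(j+1)\<close>, hence \<open>a^i b^j a = a^(i+1) b^j - j a^i b^(j+1)\<close>.\<close>
definition right_a :: "ser \<Rightarrow> ser" where
  "right_a X = (\<lambda>i j. (if 0 < i then X (i - 1) j else 0)
                     - (if 0 < j then of_nat (j - 1) * X i (j - 1) else 0))"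

text \<open>Product in \<open>\<widehat>A\<close>: \<open>X \<cdot> Y = \<Sum>_{r,s} Y_{r,s} (X a^r) b^s\<close>; the coefficient of
  \<open>a^m b^n\<close> only involves finitely many terms (\<open>s \<le> n\<close>, \<open>r \<le> m + n - s\<close>),
  since the relation is homogeneous.\<close>
definition ser_mult :: "ser \<Rightarrow> ser \<Rightarrow> ser" where
  "ser_mult X Y = (\<lambda>m n. \<Sum>s\<le>n. \<Sum>r\<le>m + n - s. Y r s * ((right_a ^^ r) X) m (n - s))"

definition a_minus_lb :: "complex \<Rightarrow> ser" where
  "a_minus_lb l = (\<lambda>p q. if p = 1 \<and> q = 0 then 1 else if p = 0 \<and> q = 1 then - l else 0)"

definition conv :: "ser \<Rightarrow> bool" where
  "conv X \<longleftrightarrow> (\<exists>R C. R > 1 \<and> C > 0 \<and>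
      (\<forall>p q. norm (X p q) \<le> C * R ^ (p + q) * fact q))"

definition in_B :: "ser \<Rightarrow> bool" where
  "in_B X \<longleftrightarrow> (\<forall>p q. 0 < p \<longrightarrow> X p q = 0) \<and>
      (\<exists>C R. \<forall>q. norm (X 0 q) \<le> C * R ^ q * fact q)"

end

theory Submission
  imports Defs
begin

lemma mult_amlb:
  "ser_mult Q (a_minus_lb l) m n =
     (if 0 < m then Q (m - 1) n else 0) - (if 0 < n then (of_nat (n - 1) + l) * Q m (n - 1) else 0)"
proof -
  have inner: "(\<Sum>r\<le>k. a_minus_lb l r s * T r) =
     (if s = 0 then (if 1 \<le> k then T 1 else 0) else if s = 1 then - l * T 0 else 0)" for k s T
  proof -
    have "(\<Sum>r\<le>k. a_minus_lb l r s * T r) = (\<Sum>r\<le>k. (if s = 0 \<and> r = 1 then T 1 else 0) + (if s = 1 \<and> r = 0 then - l * T 0 else 0))"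
      by (rule sum.cong) (auto simp: a_minus_lb_def)
    also have "\<dots> = (if s = 0 then (if 1 \<le> k then T 1 else 0) else if s = 1 then - l * T 0 else 0)"
      by (simp add: sum.distrib)
    finally show ?thesis .
  qed
  have "ser_mult Q (a_minus_lb l) m n = (\<Sum>s\<le>n. (if s = 0 then (if 1 \<le> m + n - s then (right_a Q) m (n - s) else 0) else if s = 1 then - l * Q m (n - s) else 0))"
    unfolding ser_mult_def by (simp add: inner) (intro sum.cong; simp)
  also have "\<dots> = (\<Sum>s\<le>n. (if s = 0 then (if 1 \<le> m + n then (right_a Q) m n else 0) else 0) + (if s = 1 then - l * Q m (n - 1) else 0))"
    by (rule sum.cong) auto
  also have "\<dots> = (if 1 \<le> m + n then (right_a Q) m n else 0) + (if 1 \<le> n then - l * Q m (n - 1) else 0)"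
    by (simp add: sum.distrib)
  also have "\<dots> = (if 0 < m then Q (m - 1) n else 0) - (if 0 < n then (of_nat (n - 1) + l) * Q m (n - 1) else 0)"
    by (auto simp: right_a_def algebra_simps)
  finally show ?thesis .
qed

fun Qf :: "ser \<Rightarrow> complex \<Rightarrow> nat \<Rightarrow> nat \<Rightarrow> complex" where
  "Qf X l p 0 = X (Suc p) 0"
| "Qf X l p (Suc q) = X (Suc p) (Suc q) + (of_nat q + l) * Qf X l (Suc p) q"

definition Rf :: "ser \<Rightarrow> complex \<Rightarrow> ser" where
  "Rf X l = (\<lambda>p q. if p = 0 then X 0 q + (if 0 < q then (of_nat (q - 1) + l) * Qf X l 0 (q - 1) else 0) else 0)"

lemma decomp: "X = ser_add (ser_mult (Qf X l) (a_minus_lb l)) (Rf X l)"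
proof (intro ext)
  fix m n
  show "X m n = ser_add (ser_mult (Qf X l) (a_minus_lb l)) (Rf X l) m n"
    unfolding ser_add_def mult_amlb Rf_def
    by (cases m; cases n) auto
qed

lemma uniq_Q:
  assumes "in_B R'" "X = ser_add (ser_mult Q' (a_minus_lb l)) R'"
  shows "Q' p q = Qf X l p q"
proof (induction q arbitrary: p)
  case 0
  have "X (Suc p) 0 = Q' p 0"
    using assms by (simp add: ser_add_def mult_amlb in_B_def)
  then show ?case by simp
next
  case (Suc q)
  have "X (Suc p) (Suc q) = Q' p (Suc q) - (of_nat q + l) * Q' (Suc p) q"
    using assms by (simp add: ser_add_def mult_amlb in_B_def)
  then show ?case using Suc by simp
qed

lemma uniq:
  assumes "in_B R'" "X = ser_add (ser_mult Q' (a_minus_lb l)) R'"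
  shows "Q' = Qf X l \<and> R' = Rf X l"
proof -
  have Q: "Q' = Qf X l" using uniq_Q[OF assms] by (intro ext)
  have "R' p q = Rf X l p q" for p q
  proof (cases "p = 0")
    case True
    have "X 0 q = ser_mult Q' (a_minus_lb l) 0 q + R' 0 q"
      using assms(2) by (simp add: ser_add_def)
    then show ?thesis using True Q by (simp add: mult_amlb Rf_def)
  next
    case False
    then show ?thesis using assms(1) by (simp add: in_B_def Rf_def)
  qed
  then show ?thesis using Q by blast
qed

lemma Qf_bound:
  fixes C R L :: real
  assumes R: "R > 1" and C: "C > 0" and L: "L = norm l"
    and X: "\<And>p q. norm (X p q) \<le> C * R ^ (p + q) * fact q"
  shows "norm (Qf X l p q) \<le> (C * R) * R ^ p * (2 * (1 + L) * R) ^ q * fact q"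
proof (induction q arbitrary: p)
  case 0
  have "norm (Qf X l p 0) \<le> C * R ^ (Suc p)" using X[of "Suc p" 0] by simp
  then show ?case by simp
next
  case (Suc q)
  define T where "T = 2 * (1 + L) * R"
  have L0: "L \<ge> 0" using L by simp
  have TR: "T \<ge> 2 * R" unfolding T_def using L0 R by (simp add: mult_right_mono)
  have T0: "T > 0" using R L0 T_def by simp
  have t1: "norm (X (Suc p) (Suc q)) \<le> C * R ^ (p + q + 2) * fact (Suc q)"
    using X[of "Suc p" "Suc q"] by simp
  have "R ^ (p + q + 2) = R * R ^ p * R ^ (q + 1)" by (simp add: power_add)
  also have "\<dots> \<le> R * R ^ p * ((2 * R) ^ (q + 1) / 2)"
  proof -
    have "2 * R ^ (q + 1) \<le> 2 ^ (q + 1) * R ^ (q + 1)"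
      using R by (intro mult_right_mono) (auto simp: one_le_power)
    hence "R ^ (q + 1) \<le> (2 * R) ^ (q + 1) / 2" by (simp add: power_mult_distrib mult_ac)
    thus ?thesis using R by (intro mult_left_mono) auto
  qed
  also have "\<dots> \<le> R * R ^ p * (T ^ (q + 1) / 2)"
    using R TR by (intro mult_left_mono divide_right_mono power_mono) auto
  finally have "C * R ^ (p + q + 2) \<le> C * (R * R ^ p * (T ^ (q + 1) / 2))"
    using C by (intro mult_left_mono) auto
  then have t1': "norm (X (Suc p) (Suc q)) \<le> (C * R) * R ^ p * T ^ (q + 1) * fact (Suc q) / 2"
    using t1 by (smt (verit, ccfv_SIG) fact_gt_zero mult.assoc mult.commute mult_right_mono times_divide_eq_right)
  have nq: "norm (of_nat q + l) \<le> (1 + L) * of_nat (Suc q)"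
  proof -
    have "norm (of_nat q + l) \<le> of_nat q + L" using L norm_triangle_ineq[of "of_nat q" l] by simp
    also have "\<dots> \<le> (1 + L) * of_nat (Suc q)" using L0 by (simp add: algebra_simps)
    finally show ?thesis .
  qed
  have IH: "norm (Qf X l (Suc p) q) \<le> (C * R) * R ^ (Suc p) * T ^ q * fact q"
    using Suc[of "Suc p"] unfolding T_def by simp
  have "norm ((of_nat q + l) * Qf X l (Suc p) q) \<le> ((1 + L) * of_nat (Suc q)) * ((C * R) * R ^ (Suc p) * T ^ q * fact q)"
    unfolding norm_mult using nq IH L0 by (intro mult_mono) auto
  also have "\<dots> = (C * R) * R ^ p * (((1 + L) * R) * T ^ q) * fact (Suc q)"
    by (simp add: algebra_simps)
  also have "\<dots> = (C * R) * R ^ p * T ^ (q + 1) * fact (Suc q) / 2"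
    unfolding T_def by (simp add: algebra_simps)
  finally have t2: "norm ((of_nat q + l) * Qf X l (Suc p) q) \<le> (C * R) * R ^ p * T ^ (q + 1) * fact (Suc q) / 2" .
  have "norm (Qf X l p (Suc q)) \<le> norm (X (Suc p) (Suc q)) + norm ((of_nat q + l) * Qf X l (Suc p) q)"
    by (simp add: norm_triangle_ineq)
  also have "\<dots> \<le> (C * R) * R ^ p * T ^ (q + 1) * fact (Suc q)"
    using t1' t2 by linarith
  finally show ?case unfolding T_def by simp
qed

lemma conv_Q:
  assumes "conv X" shows "conv (Qf X l) \<and> in_B (Rf X l)"
proof -
  obtain R C :: real where R: "R > 1" and C: "C > 0" and X: "\<And>p q. norm (X p q) \<le> C * R ^ (p + q) * fact q"
    using assms unfolding conv_def by blast
  define L where "L = norm l"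
  define S where "S = 2 * (1 + L) * R"
  have L0: "L \<ge> 0" using L_def by simp
  have S1: "S > 1" unfolding S_def using R L0
    by (smt (verit, best) mult_le_cancel_right1)
  have B: "norm (Qf X l p q) \<le> (C * R) * S ^ (p + q) * fact q" for p q
  proof -
    have SR: "R \<le> S" unfolding S_def using L0 R by (smt (verit) mult_le_cancel_right1)
    have "R ^ p \<le> S ^ p" using SR R by (intro power_mono) auto
    hence "(C * R) * R ^ p * S ^ q * fact q \<le> (C * R) * S ^ p * S ^ q * fact q"
      using C R S1 by (intro mult_right_mono mult_left_mono) auto
    thus ?thesis using Qf_bound[OF R C L_def X, of p q] unfolding S_def
      by (simp add: power_add mult.assoc)
  qed
  have cQ: "conv (Qf X l)" unfolding conv_def
    using B S1 C R by (intro exI[of _ S] exI[of _ "C * R"]) auto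
  have SR: "R \<le> S" unfolding S_def using L0 R by (smt (verit) mult_le_cancel_right1)
  have "norm (Rf X l 0 q) \<le> (C + (1 + L) * (C * R)) * S ^ q * fact q" for q
  proof (cases q)
    case 0
    have "0 \<le> (1 + L) * (C * R)" using C R L0 by simp
    then show ?thesis using X[of 0 0] 0 by (simp add: Rf_def)
  next
    case (Suc k)
    have a: "norm (X 0 q) \<le> C * S ^ q * fact q"
      using X[of 0 q] C SR R by (smt (verit) fact_gt_zero mult_left_mono mult_right_mono power_mono add_0 less_imp_le)
    have nq: "norm (of_nat k + l) \<le> (1 + L) * of_nat q"
    proof -
      have "norm (of_nat k + l) \<le> of_nat k + L" using L_def norm_triangle_ineq[of "of_nat k" l] by simp
      also have "\<dots> \<le> (1 + L) * of_nat q" using L0 Suc by (simp add: algebra_simps)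
      finally show ?thesis .
    qed
    have "norm ((of_nat k + l) * Qf X l 0 k) \<le> ((1 + L) * of_nat q) * ((C * R) * S ^ k * fact k)"
      unfolding norm_mult using nq B[of 0 k] L0 by (intro mult_mono) auto
    also have "\<dots> = (1 + L) * (C * R) * S ^ k * fact q"
      using Suc by (simp add: algebra_simps)
    also have "\<dots> \<le> (1 + L) * (C * R) * S ^ q * fact q"
      using Suc S1 C R L0 by (intro mult_right_mono mult_left_mono) auto
    finally have b: "norm ((of_nat k + l) * Qf X l 0 k) \<le> (1 + L) * (C * R) * S ^ q * fact q" .
    have "norm (Rf X l 0 q) \<le> norm (X 0 q) + norm ((of_nat k + l) * Qf X l 0 k)"
      using Suc by (simp add: Rf_def norm_triangle_ineq)
    also have "\<dots> \<le> (C + (1 + L) * (C * R)) * S ^ q * fact q"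
      using a b by (simp add: algebra_simps)
    finally show ?thesis .
  qed
  hence "in_B (Rf X l)" unfolding in_B_def
    by (intro conjI exI[of _ "C + (1 + L) * (C * R)"] exI[of _ S]) (auto simp: Rf_def)
  with cQ show ?thesis by blast
qed

theorem proposition1p2p3:
  fixes X :: ser and l :: complex
  assumes "conv X"
  shows "\<exists>Q R. conv Q \<and> in_B R \<and> X = ser_add (ser_mult Q (a_minus_lb l)) R \<and>
           (\<forall>Q' R'. conv Q' \<and> in_B R' \<and> X = ser_add (ser_mult Q' (a_minus_lb l)) R'
                \<longrightarrow> Q' = Q \<and> R' = R)"
  using conv_Q[OF assms, of l] decomp[of X l] uniq[of _ X _ l] by blast

end
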